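(* Let $X,\Phi,k_z$ be as in the context. Let $A\subset\mathbb R^d$ be bounded Borel and $h:\mathcal K\to[0,\infty)$ Borel with $\int_{\mathcal K}h\,d\psi[X]<\infty$ a.s. For $\varepsilon>0$ let $I^\varepsilon\subset\Phi\cap\varepsilon^{-1}A$ be random sets with $\varepsilon^d\#I^\varepsilon\to0$ a.s. as $\varepsilon\searrow0$. Then $\varepsilon^d\sum_{z\in I^\varepsilon}h(k_z)\to0$ a.s.
   Context: All random objects are defined on a fixed probability space $(\Omega,\mathcal F,\mathbb P)$; $|\cdot|$ is Lebesgue measure on $\mathbb R^d$. Let $\mathcal K$ be a complete separable metric space. A set $Y\subset\mathbb R^d\times\mathcal K$ is admissible if it is the graph of a $\mathcal K$-valued function whose domain $\mathrm{dom}\,Y$ is locally finite; an MPP with marks in $\mathcal K$ is a random admissible set (measurable w.r.t. the $\sigma$-algebra generated by $Y\mapsto\#(Y\cap A)$, $A$ Borel). $X$ is stationary if $S_\tau X:=\{(y-\tau,k):(y,k)\in X\}$ has the same law as $X$ for every $\tau\in\mathbb R^d$; $\mathcal I_X:=\{\{X\in\mathcal A\}:\mathbb P(X\in\mathcal A\triangle S_\tau\mathcal A)=0\ \forall\tau\}$. If $X$ is stationary with $\mathbb E[\#(X\cap A)]<\infty$ for bounded Borel $A\subset\mathbb R^d\times\mathcal K$, then $\psi[X]$ denotes the $\mathcal I_X$-measurable random measure on $\mathcal K$ such that $\mathbb E[\frac1{|A|}\sum_{(x,k)\in X,x\in A}f(k)\mid\mathcal I_X]=\int f\,d\psi[X]$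 a.s. for every nonnegative Borel $f$ and Borel $A\subset\mathbb R^d$ with $0<|A|<\infty$. Here $X$ is a stationary MPP with marks in $\mathcal K$ such that $\mathbb E[\#(X\cap A)]<\infty$ for every bounded Borel $A\subset\mathbb R^d\times\mathcal K$. $\Phi:=\mathrm{dom}\,X$ is the ground process, and $k_z$ denotes the mark with $(z,k_z)\in X$. *)

theory Defs
  imports "HOL-Probability.Probability"
begin

definition npts :: "'p set \<Rightarrow> 'p set \<Rightarrow> ennreal" where
  "npts Y A = emeasure (count_space UNIV) (Y \<inter> A)"

definition admissible :: "('a::metric_space \<times> 'k) set \<Rightarrow> bool" where
  "admissible Y \<longleftrightarrow>
     (\<forall>x k k'. (x, k) \<in> Y \<longrightarrow> (x, k') \<in> Y \<longrightarrow> k = k') \<and>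
     (\<forall>B. bounded B \<longrightarrow> finite (fst ` Y \<inter> B))"

definition mpp_space :: "('a::metric_space \<times> 'k::topological_space) set measure" where
  "mpp_space = sigma {Y. admissible Y}
     {{Y. admissible Y \<and> npts Y A = n} | A n. A \<in> sets borel}"

definition shift :: "'a::real_vector \<Rightarrow> ('a \<times> 'k) set \<Rightarrow> ('a \<times> 'k) set" where
  "shift \<tau> Y = (\<lambda>(y, k). (y - \<tau>, k)) ` Y"

definition is_mpp :: "'b measure \<Rightarrow> ('b \<Rightarrow> ('a::metric_space \<times> 'k::topological_space) set) \<Rightarrow> bool" where
  "is_mpp M X \<longleftrightarrow> X \<in> measurable M mpp_space"

definition stationary_mpp ::
  "'b measure \<Rightarrow> ('b \<Rightarrow> ('a::{real_normed_vector} \<times> 'k::topological_space) set) \<Rightarrow> bool" where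
  "stationary_mpp M X \<longleftrightarrow>
     is_mpp M X \<and> (\<forall>\<tau>. distr M mpp_space (\<lambda>\<omega>. shift \<tau> (X \<omega>)) = distr M mpp_space X)"

definition inv_events ::
  "'b measure \<Rightarrow> ('b \<Rightarrow> ('a::{real_normed_vector} \<times> 'k::topological_space) set) \<Rightarrow> 'b set set" where
  "inv_events M X =
     {X -` \<A> \<inter> space M | \<A>. \<A> \<in> sets mpp_space \<and>
        (\<forall>\<tau>. measure M {\<omega> \<in> space M. X \<omega> \<in> (\<A> - shift \<tau> ` \<A>) \<union> (shift \<tau> ` \<A> - \<A>)} = 0)}"

definition inv_sigma ::
  "'b measure \<Rightarrow> ('b \<Rightarrow> ('a::{real_normed_vector} \<times> 'k::topological_space) set) \<Rightarrow> 'b measure" where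
  "inv_sigma M X = sigma (space M) (inv_events M X)"

text \<open>psi is (a version of) the random intensity measure psi[X]: an I_X-measurable random
  measure on the mark space such that
  E[ |A|^{-1} sum_{(x,k) in X, x in A} f k | I_X ] = integral of f w.r.t. psi, a.s.\<close>
definition is_psi ::
  "'b measure \<Rightarrow> ('b \<Rightarrow> ('a::euclidean_space \<times> 'k::topological_space) set) \<Rightarrow> ('b \<Rightarrow> 'k measure) \<Rightarrow> bool" where
  "is_psi M X psi \<longleftrightarrow>
     (\<forall>\<omega>\<in>space M. sets (psi \<omega>) = sets borel) \<and>
     (\<forall>B \<in> sets borel. (\<lambda>\<omega>. emeasure (psi \<omega>) B) \<in> borel_measurable (inv_sigma M X)) \<and>
     (\<forall>f :: 'k \<Rightarrow> ennreal. \<forall>A :: 'a set.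
        f \<in> borel_measurable borel \<longrightarrow> A \<in> sets borel \<longrightarrow>
        0 < emeasure lborel A \<longrightarrow> emeasure lborel A < \<infinity> \<longrightarrow>
        (AE \<omega> in M. nn_cond_exp M (inv_sigma M X)
            (\<lambda>\<omega>. (\<integral>\<^sup>+ p. f (snd p) \<partial>count_space {p \<in> X \<omega>. fst p \<in> A}) / emeasure lborel A) \<omega>
          = (\<integral>\<^sup>+ k. f k \<partial>psi \<omega>)))"

definition mark :: "('a \<times> 'k) set \<Rightarrow> 'a \<Rightarrow> 'k" where
  "mark Y z = (THE k. (z, k) \<in> Y)"

end

theory Submission
  imports Defs
begin

lemma mpp_gen_subset: "{{Y. admissible Y \<and> npts Y A = n} | A n. A \<in> sets borel} \<subseteq> Pow {Y::('a::metric_space \<times> 'k::topological_space) set. admissible Y}"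
  by auto

lemma space_mpp: "space (mpp_space :: ('a::metric_space \<times> 'k::topological_space) set measure) = {Y. admissible Y}"
  unfolding mpp_space_def by (rule space_measure_of[OF mpp_gen_subset])

lemma sets_mpp: "sets (mpp_space :: ('a::metric_space \<times> 'k::topological_space) set measure) =
   sigma_sets {Y. admissible Y} {{Y. admissible Y \<and> npts Y A = n} | A n. A \<in> sets borel}"
  unfolding mpp_space_def by (rule sets_measure_of[OF mpp_gen_subset])

lemma npts_values: "npts Y S \<in> range of_nat \<union> {\<infinity>}"
  unfolding npts_def by (subst emeasure_count_space) auto

lemma measurable_npts:
  fixes S :: "('a::metric_space \<times> 'k::topological_space) set"
  assumes "S \<in> sets borel"
  shows "(\<lambda>Y. npts Y S) \<in> borel_measurable (mpp_space :: ('a \<times> 'k) set measure)"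
proof -
  have c: "countable (range (of_nat :: nat \<Rightarrow> ennreal) \<union> {\<infinity>})" by auto
  have "(\<lambda>Y. npts Y S) \<in> measurable (mpp_space :: ('a \<times> 'k) set measure) (count_space (range of_nat \<union> {\<infinity>}))"
    unfolding measurable_count_space_eq_countable[OF c]
  proof (intro conjI ballI)
    show "(\<lambda>Y. npts Y S) \<in> space mpp_space \<rightarrow> range of_nat \<union> {\<infinity>}" using npts_values by blast
  next
    fix a assume "a \<in> range (of_nat :: nat \<Rightarrow> ennreal) \<union> {\<infinity>}"
    have "(\<lambda>Y. npts Y S) -` {a} \<inter> space (mpp_space :: ('a \<times> 'k) set measure) = {Y. admissible Y \<and> npts Y S = a}"
      by (auto simp: space_mpp)
    also have "\<dots> \<in> sets (mpp_space :: ('a \<times> 'k) set measure)"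
      unfolding sets_mpp using assms by (intro sigma_sets.Basic) blast
    finally show "(\<lambda>Y. npts Y S) -` {a} \<inter> space (mpp_space :: ('a \<times> 'k) set measure) \<in> sets mpp_space" .
  qed
  then show ?thesis
    by (rule measurable_compose) (simp add: measurable_count_space_eq1)
qed

lemma shift_mem: "(y, k) \<in> shift \<tau> Y \<longleftrightarrow> (y + \<tau>, k) \<in> Y"
proof
  assume "(y, k) \<in> shift \<tau> Y"
  then obtain y' k' where "(y', k') \<in> Y" "y = y' - \<tau>" "k = k'" unfolding shift_def by auto
  then show "(y + \<tau>, k) \<in> Y" by simp
next
  assume "(y + \<tau>, k) \<in> Y"
  then show "(y, k) \<in> shift \<tau> Y" unfolding shift_def by (auto intro!: image_eqI[where x="(y + \<tau>, k)"])
qed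

lemma shift_shift: "shift a (shift b Y) = shift (a + b) Y"
proof -
  have "\<And>y k. (y, k) \<in> shift a (shift b Y) \<longleftrightarrow> (y, k) \<in> shift (a + b) Y"
    by (simp add: shift_mem algebra_simps)
  then show ?thesis by auto
qed

lemma shift_0[simp]: "shift 0 Y = Y"
  unfolding shift_def by auto

lemma shift_inv: "shift (- \<tau>) (shift \<tau> Y) = Y"
  by (simp add: shift_shift)

lemma inj_shift: "inj (shift \<tau>)"
  by (metis injI shift_inv)

lemma admissible_shift:
  fixes Y :: "('a::real_normed_vector \<times> 'k) set"
  assumes "admissible Y" shows "admissible (shift \<tau> Y)"
  unfolding admissible_def
proof (intro conjI allI impI)
  fix x k k' assume "(x, k) \<in> shift \<tau> Y" "(x, k') \<in> shift \<tau> Y"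
  then show "k = k'" using assms unfolding admissible_def shift_mem by blast
next
  fix B :: "'a set" assume "bounded B"
  then have "bounded ((\<lambda>y. y + \<tau>) ` B)" using bounded_translation[of B \<tau>] by (simp add: add.commute)
  then have f: "finite (fst ` Y \<inter> (\<lambda>y. y + \<tau>) ` B)" using assms unfolding admissible_def by blast
  have "fst ` shift \<tau> Y \<inter> B \<subseteq> (\<lambda>y. y - \<tau>) ` (fst ` Y \<inter> (\<lambda>y. y + \<tau>) ` B)"
  proof
    fix y assume "y \<in> fst ` shift \<tau> Y \<inter> B"
    then obtain k where "(y, k) \<in> shift \<tau> Y" "y \<in> B" by force
    then have "(y + \<tau>, k) \<in> Y" by (simp add: shift_mem)
    then show "y \<in> (\<lambda>y. y - \<tau>) ` (fst ` Y \<inter> (\<lambda>y. y + \<tau>) ` B)"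
      using \<open>y \<in> B\<close> by (auto simp: image_iff intro!: bexI[of _ "y + \<tau>"]) (metis fst_conv)
  qed
  then show "finite (fst ` shift \<tau> Y \<inter> B)" using f by (meson finite_imageI finite_subset)
qed

lemma npts_shift:
  fixes Y :: "('a::real_normed_vector \<times> 'k) set"
  shows "npts (shift \<tau> Y) S = npts Y ((\<lambda>p. (fst p - \<tau>, snd p)) -` S)"
proof -
  let ?f = "\<lambda>p::'a \<times> 'k. (fst p - \<tau>, snd p)"
  have inj: "inj ?f" by (auto intro!: injI simp: prod_eq_iff)
  have eq: "shift \<tau> Y \<inter> S = ?f ` (Y \<inter> ?f -` S)"
    unfolding shift_def by (auto simp: case_prod_beta)
  have i2: "inj_on ?f (Y \<inter> ?f -` S)" using inj by (meson inj_on_subset subset_UNIV)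
  show ?thesis unfolding npts_def eq
    using i2 by (simp add: emeasure_count_space finite_image_iff card_image)
qed

lemma measurable_shift:
  "shift \<tau> \<in> measurable (mpp_space :: ('a::euclidean_space \<times> 'k::second_countable_topology) set measure) mpp_space"
proof -
  have "shift \<tau> \<in> measurable (mpp_space :: ('a \<times> 'k) set measure)
     (measure_of {Y. admissible Y} {{Y. admissible Y \<and> npts Y A = n} | A n. A \<in> sets borel} (\<lambda>_. 0))"
  proof (rule measurable_measure_of[OF mpp_gen_subset])
    show "shift \<tau> \<in> space mpp_space \<rightarrow> {Y::('a \<times> 'k) set. admissible Y}"
      by (auto simp: space_mpp admissible_shift)
  next
    fix y assume "y \<in> {{Y::('a \<times> 'k) set. admissible Y \<and> npts Y A = n} | A n. A \<in> sets borel}"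
    then obtain A n where y: "y = {Y. admissible Y \<and> npts Y A = n}" and A: "A \<in> sets borel" by blast
    let ?f = "\<lambda>p::'a \<times> 'k. (fst p - \<tau>, snd p)"
    have "?f \<in> borel_measurable borel"
      by (intro borel_measurable_continuous_onI continuous_on_Pair continuous_on_diff continuous_on_fst continuous_on_snd continuous_on_const continuous_on_id)
    then have A': "?f -` A \<in> sets borel" using measurable_sets[OF \<open>?f \<in> borel_measurable borel\<close> A] by (simp add: space_borel)
    have "shift \<tau> -` y \<inter> space mpp_space = {Y. admissible Y \<and> npts Y (?f -` A) = n}"
      using y by (auto simp: space_mpp admissible_shift npts_shift)
    also have "\<dots> \<in> sets mpp_space" unfolding sets_mpp using A' by (intro sigma_sets.Basic) blast
    finally show "shift \<tau> -` y \<inter> space mpp_space \<in> sets (mpp_space :: ('a \<times> 'k) set measure)" .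
  qed
  then show ?thesis unfolding mpp_space_def .
qed

definition nu :: "('k \<Rightarrow> ennreal) \<Rightarrow> ('a \<times> 'k) set \<Rightarrow> 'a set \<Rightarrow> ennreal" where
  "nu g Y B = (\<integral>\<^sup>+ p. g (snd p) \<partial>count_space {p \<in> Y. fst p \<in> B})"

lemma nu_UNIV: "nu g Y B = (\<integral>\<^sup>+ p. g (snd p) * indicator {p \<in> Y. fst p \<in> B} p \<partial>count_space UNIV)"
  unfolding nu_def by (rule nn_integral_count_space_indicator) simp

lemma nu_indicator: "nu (indicator C) Y B = npts Y (B \<times> C)"
proof -
  let ?S = "{p \<in> Y. fst p \<in> B}"
  have "nu (indicator C) Y B = (\<integral>\<^sup>+ p. indicator {p \<in> ?S. snd p \<in> C} p \<partial>count_space ?S)"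
    unfolding nu_def by (intro nn_integral_cong) (auto simp: indicator_def)
  also have "\<dots> = emeasure (count_space ?S) {p \<in> ?S. snd p \<in> C}" by (rule nn_integral_indicator) auto
  also have "{p \<in> ?S. snd p \<in> C} = Y \<inter> (B \<times> C)" by auto
  also have "emeasure (count_space ?S) (Y \<inter> (B \<times> C)) = emeasure (count_space UNIV) (Y \<inter> (B \<times> C))"
    by (subst (1 2) emeasure_count_space) auto
  finally show ?thesis unfolding npts_def .
qed

lemma nu_simple:
  fixes u :: "'k::topological_space \<Rightarrow> ennreal"
  assumes "simple_function borel u"
  shows "nu u Y B = (\<Sum>c\<in>u ` UNIV. c * npts Y (B \<times> (u -` {c})))"
proof -
  have rep: "u k = (\<Sum>c\<in>u ` UNIV. c * indicator (u -` {c}) k)" for k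
  proof -
    have "u k = (\<Sum>y\<in>u ` space borel. y * indicator (u -` {y} \<inter> space borel) k)"
      by (rule simple_function_indicator_representation[OF assms]) simp
    then show ?thesis by (simp only: space_borel Int_UNIV_right)
  qed
  have "nu u Y B = (\<integral>\<^sup>+ p. (\<Sum>c\<in>u ` UNIV. c * indicator (u -` {c}) (snd p)) \<partial>count_space {p \<in> Y. fst p \<in> B})"
    unfolding nu_def by (subst rep[symmetric]) (rule refl)
  also have "\<dots> = (\<Sum>c\<in>u ` UNIV. (\<integral>\<^sup>+ p. c * indicator (u -` {c}) (snd p) \<partial>count_space {p \<in> Y. fst p \<in> B}))"
    by (rule nn_integral_sum) simp
  also have "\<dots> = (\<Sum>c\<in>u ` UNIV. c * nu (indicator (u -` {c})) Y B)"
    unfolding nu_def by (intro sum.cong refl nn_integral_cmult) simp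
  finally show ?thesis by (simp add: nu_indicator)
qed

lemma measurable_nu:
  fixes g :: "'k::second_countable_topology \<Rightarrow> ennreal" and B :: "'a::euclidean_space set"
  assumes g: "g \<in> borel_measurable borel" and B: "B \<in> sets borel"
  shows "(\<lambda>Y. nu g Y B) \<in> borel_measurable (mpp_space :: ('a \<times> 'k) set measure)"
proof -
  obtain U where U: "\<And>i. simple_function borel (U i)" "incseq U" "\<And>x. (SUP i. U i x) = g x"
    using borel_measurable_implies_simple_function_sequence'[OF g] by metis
  have eq: "nu g Y B = (SUP i. nu (U i) Y B)" for Y :: "('a \<times> 'k) set"
  proof -
    have "nu g Y B = (\<integral>\<^sup>+ p. (SUP i. U i (snd p)) \<partial>count_space {p \<in> Y. fst p \<in> B})"
      unfolding nu_def using U(3) by simp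
    also have "\<dots> = (SUP i. nu (U i) Y B)"
      unfolding nu_def
      by (rule nn_integral_monotone_convergence_SUP) (use U(2) in \<open>auto simp: incseq_def le_fun_def\<close>)
    finally show ?thesis .
  qed
  have m: "(\<lambda>Y. nu (U i) Y B) \<in> borel_measurable (mpp_space :: ('a \<times> 'k) set measure)" for i
  proof -
    have fin: "finite (U i ` UNIV)" using U(1)[of i] unfolding simple_function_def by simp
    have sets: "U i -` {c} \<in> sets borel" if "c \<in> U i ` UNIV" for c
      using U(1)[of i] that unfolding simple_function_def by auto
    have Bset: "B \<times> U i -` {c} \<in> sets (borel :: ('a \<times> 'k) measure)" if "c \<in> U i ` UNIV" for c
      using sets[OF that] B by (metis borel_prod pair_measureI)
    have "(\<lambda>Y. \<Sum>c\<in>U i ` UNIV. c * npts Y (B \<times> (U i -` {c}))) \<in> borel_measurable (mpp_space :: ('a \<times> 'k) set measure)"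
    proof (intro borel_measurable_sum)
      fix c assume c: "c \<in> U i ` UNIV"
      have [measurable]: "(\<lambda>Y. npts Y (B \<times> (U i -` {c}))) \<in> borel_measurable (mpp_space :: ('a \<times> 'k) set measure)"
        using measurable_npts Bset[OF c] by blast
      show "(\<lambda>Y. c * npts Y (B \<times> (U i -` {c}))) \<in> borel_measurable (mpp_space :: ('a \<times> 'k) set measure)"
        by measurable
    qed
    then show ?thesis by (subst nu_simple[OF U(1)]) simp
  qed
  show ?thesis unfolding eq by (intro borel_measurable_SUP m) simp
qed

lemma nu_shift:
  fixes Y :: "('a::real_normed_vector \<times> 'k) set"
  shows "nu g (shift x Y) B = nu g Y {y. y - x \<in> B}"
proof -
  let ?f = "\<lambda>p::'a \<times> 'k. (fst p - x, snd p)"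
  have bij: "bij_betw ?f {p \<in> Y. fst p \<in> {y. y - x \<in> B}} {p \<in> shift x Y. fst p \<in> B}"
  proof (rule bij_betwI[where g="\<lambda>p. (fst p + x, snd p)"])
    show "?f \<in> {p \<in> Y. fst p \<in> {y. y - x \<in> B}} \<rightarrow> {p \<in> shift x Y. fst p \<in> B}"
      by (auto simp: shift_mem)
    show "(\<lambda>p. (fst p + x, snd p)) \<in> {p \<in> shift x Y. fst p \<in> B} \<rightarrow> {p \<in> Y. fst p \<in> {y. y - x \<in> B}}"
      by (auto simp: shift_mem)
  qed auto
  have "(\<integral>\<^sup>+ p. g (snd (?f p)) \<partial>count_space {p \<in> Y. fst p \<in> {y. y - x \<in> B}}) =
        (\<integral>\<^sup>+ p. g (snd p) \<partial>count_space {p \<in> shift x Y. fst p \<in> B})"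
    by (rule nn_integral_bij_count_space[OF bij])
  then show ?thesis unfolding nu_def by simp
qed

lemma nu_shift_ball:
  fixes Y :: "('a::real_normed_vector \<times> 'k) set"
  shows "nu g (shift x Y) (ball 0 r) = nu g Y (ball x r)"
proof -
  have "{y. y - x \<in> ball 0 r} = ball x r" by (auto simp: dist_norm norm_minus_commute)
  then show ?thesis by (simp add: nu_shift)
qed

lemma nu_mono: "B \<subseteq> B' \<Longrightarrow> nu g Y B \<le> nu g Y B'"
  unfolding nu_UNIV by (intro nn_integral_mono mult_left_mono) (auto simp: indicator_def)

lemma nu_sum_disjoint:
  assumes "finite C" "disjoint_family_on B C"
  shows "(\<Sum>i\<in>C. nu g Y (B i)) = nu g Y (\<Union>i\<in>C. B i)"
proof -
  have df: "disjoint_family_on (\<lambda>i. {p \<in> Y. fst p \<in> B i}) C"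
    using assms(2) unfolding disjoint_family_on_def by auto
  have eq: "{p \<in> Y. fst p \<in> (\<Union>i\<in>C. B i)} = (\<Union>i\<in>C. {p \<in> Y. fst p \<in> B i})" by auto
  have "(\<Sum>i\<in>C. nu g Y (B i)) = (\<integral>\<^sup>+ p. (\<Sum>i\<in>C. g (snd p) * indicator {p \<in> Y. fst p \<in> B i} p) \<partial>count_space UNIV)"
    unfolding nu_UNIV by (rule nn_integral_sum[symmetric]) simp
  also have "\<dots> = nu g Y (\<Union>i\<in>C. B i)"
    unfolding nu_UNIV eq
    by (intro nn_integral_cong) (simp add: indicator_UN_disjoint[OF assms(1) df] sum_distrib_left)
  finally show ?thesis .
qed

definition pt :: "('a::euclidean_space \<Rightarrow> int) \<Rightarrow> 'a" where
  "pt z = (\<Sum>b\<in>Basis. of_int (z b) *\<^sub>R b)"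

definition Zs :: "nat \<Rightarrow> ('a::euclidean_space \<Rightarrow> int) set" where
  "Zs N = PiE Basis (\<lambda>_. {- int N..int N})"

lemma pt_inner: "b \<in> Basis \<Longrightarrow> pt z \<bullet> b = of_int (z b)"
  unfolding pt_def by (simp add: inner_sum_left inner_Basis if_distrib cong: if_cong)

lemma finite_Zs: "finite (Zs N)"
  unfolding Zs_def by (intro finite_PiE) auto

lemma card_Zs: "card (Zs N :: ('a::euclidean_space \<Rightarrow> int) set) = (2 * N + 1) ^ DIM('a)"
proof -
  have "nat (2 * int N + 1) = 2 * N + 1" by simp
  then show ?thesis unfolding Zs_def by (simp add: card_PiE)
qed

lemma card_int_interval:
  fixes a \<rho> :: real assumes "\<rho> \<ge> 0"
  shows "finite {w::int. \<bar>real_of_int w - a\<bar> < \<rho>}"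
    and "real (card {w::int. \<bar>real_of_int w - a\<bar> < \<rho>}) \<le> 2 * \<rho> + 1"
proof -
  have sub: "{w::int. \<bar>real_of_int w - a\<bar> < \<rho>} \<subseteq> {\<lceil>a - \<rho>\<rceil>..\<lfloor>a + \<rho>\<rfloor>}"
    by (auto simp: abs_less_iff ceiling_le_iff le_floor_iff)
  then show "finite {w::int. \<bar>real_of_int w - a\<bar> < \<rho>}" by (rule finite_subset) simp
  then have "card {w::int. \<bar>real_of_int w - a\<bar> < \<rho>} \<le> card {\<lceil>a - \<rho>\<rceil>..\<lfloor>a + \<rho>\<rfloor>}"
    using sub by (intro card_mono) auto
  also have "real (card {\<lceil>a - \<rho>\<rceil>..\<lfloor>a + \<rho>\<rfloor>}) \<le> 2 * \<rho> + 1"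
  proof -
    have "real_of_int (\<lfloor>a + \<rho>\<rfloor> - \<lceil>a - \<rho>\<rceil> + 1) \<le> 2 * \<rho> + 1"
      using of_int_floor_le[of "a + \<rho>"] le_of_int_ceiling[of "a - \<rho>"] by simp linarith
    then show ?thesis
    proof (cases "\<lfloor>a + \<rho>\<rfloor> - \<lceil>a - \<rho>\<rceil> + 1 \<ge> 0")
      case True
      then have "real (nat (\<lfloor>a + \<rho>\<rfloor> - \<lceil>a - \<rho>\<rceil> + 1)) = real_of_int (\<lfloor>a + \<rho>\<rfloor> - \<lceil>a - \<rho>\<rceil> + 1)"
        by (rule of_nat_nat)
      with \<open>real_of_int (\<lfloor>a + \<rho>\<rfloor> - \<lceil>a - \<rho>\<rceil> + 1) \<le> 2 * \<rho> + 1\<close> show ?thesis by simp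
    next
      case False
      then show ?thesis using assms by simp
    qed
  qed
  finally show "real (card {w::int. \<bar>real_of_int w - a\<bar> < \<rho>}) \<le> 2 * \<rho> + 1" by simp
qed

lemma card_lattice_ball:
  fixes c :: "'a::euclidean_space" assumes "\<rho> \<ge> 0"
  shows "real (card {z \<in> Zs N. pt z \<in> ball c \<rho>}) \<le> (2 * \<rho> + 1) ^ DIM('a)"
proof -
  let ?P = "PiE Basis (\<lambda>b. {w::int. \<bar>real_of_int w - c \<bullet> b\<bar> < \<rho>})"
  have sub: "{z \<in> Zs N. pt z \<in> ball c \<rho>} \<subseteq> ?P"
  proof
    fix z assume z: "z \<in> {z \<in> Zs N. pt z \<in> ball c \<rho>}"
    show "z \<in> ?P"
    proof (rule PiE_I)
      fix b :: 'a assume b: "b \<in> Basis"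
      have "\<bar>(pt z - c) \<bullet> b\<bar> \<le> norm (pt z - c)" using b by (rule Basis_le_norm)
      also have "\<dots> < \<rho>" using z by (simp add: dist_norm norm_minus_commute)
      finally show "z b \<in> {w. \<bar>real_of_int w - c \<bullet> b\<bar> < \<rho>}" using b by (simp add: inner_diff_left pt_inner)
    next
      fix b :: 'a assume "b \<notin> Basis" then show "z b = undefined" using z unfolding Zs_def by auto
    qed
  qed
  have fin: "finite ?P" by (intro finite_PiE card_int_interval(1) assms) simp
  have "card {z \<in> Zs N. pt z \<in> ball c \<rho>} \<le> card ?P" by (rule card_mono[OF fin sub])
  then have "real (card {z \<in> Zs N. pt z \<in> ball c \<rho>}) \<le> real (card ?P)" by simp
  also have "\<dots> = (\<Prod>b\<in>Basis. real (card {w::int. \<bar>real_of_int w - c \<bullet> b\<bar> < \<rho>}))"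
    by (simp add: card_PiE)
  also have "\<dots> \<le> (\<Prod>b\<in>(Basis::'a set). 2 * \<rho> + 1)"
    by (intro prod_mono conjI card_int_interval(2) assms) simp
  also have "\<dots> = (2 * \<rho> + 1) ^ DIM('a)" by simp
  finally show ?thesis .
qed

lemma covering:
  fixes Y :: "('a::euclidean_space \<times> 'k) set" and t :: real and g :: "'k \<Rightarrow> ennreal" and N :: nat
  assumes t: "t > 0"
  defines "K \<equiv> {z \<in> Zs N. \<exists>r\<in>{1..N}. ennreal (t * real r ^ DIM('a)) < nu g Y (ball (pt z) (real r))}"
  shows "ennreal t * of_nat (card K) \<le> 11 ^ DIM('a) * nu g Y (cbox (- (2 * real N) *\<^sub>R One) ((2 * real N) *\<^sub>R One))"
proof -
  let ?d = "DIM('a)"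
  have "\<forall>z\<in>K. \<exists>r. r \<in> {1..N} \<and> ennreal (t * real r ^ ?d) < nu g Y (ball (pt z) (real r))"
    unfolding K_def by blast
  then obtain rr where rr: "\<And>z. z \<in> K \<Longrightarrow> rr z \<in> {1..N} \<and> ennreal (t * real (rr z) ^ ?d) < nu g Y (ball (pt z) (real (rr z)))"
    by metis
  define rad where "rad z = real (rr z)" for z
  have rad1: "z \<in> K \<Longrightarrow> 1 \<le> rad z \<and> rad z \<le> real N" for z using rr[of z] unfolding rad_def by auto
  have finK: "finite K" unfolding K_def using finite_Zs[of N] by (rule rev_finite_subset) auto
  have KZ: "K \<subseteq> Zs N" unfolding K_def by auto
  have "pt ` K \<subseteq> (\<Union>i\<in>K. ball (pt i) (rad i))" using rad1 by force
  then obtain C where C: "countable C" "C \<subseteq> K"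
      "pairwise (\<lambda>i j. disjnt (ball (pt i) (rad i)) (ball (pt j) (rad j))) C"
      "pt ` K \<subseteq> (\<Union>i\<in>C. ball (pt i) (5 * rad i))"
    using Vitali_covering_lemma_balls[where S="pt ` K" and K=K and a=pt and r=rad and B="real N"] rad1 by force
  have finC: "finite C" using C(2) finK finite_subset by blast
  have "K \<subseteq> (\<Union>i\<in>C. {z \<in> Zs N. pt z \<in> ball (pt i) (5 * rad i)})" using C(4) KZ by blast
  then have "card K \<le> card (\<Union>i\<in>C. {z \<in> Zs N. pt z \<in> ball (pt i) (5 * rad i)})"
    using finC finite_Zs[of N] by (intro card_mono finite_UN_I) auto
  also have "\<dots> \<le> (\<Sum>i\<in>C. card {z \<in> Zs N. pt z \<in> ball (pt i) (5 * rad i)})"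
    by (rule card_UN_le[OF finC])
  finally have cK: "card K \<le> (\<Sum>i\<in>C. card {z \<in> Zs N. pt z \<in> ball (pt i) (5 * rad i)})" .
  have "real (card K) \<le> (\<Sum>i\<in>C. real (card {z \<in> Zs N. pt z \<in> ball (pt i) (5 * rad i)}))"
    using of_nat_mono[OF cK, where 'a=real] by (simp only: of_nat_sum)
  also have "\<dots> \<le> (\<Sum>i\<in>C. (11 * rad i) ^ ?d)"
  proof (intro sum_mono)
    fix i assume i: "i \<in> C"
    then have r1: "1 \<le> rad i" using rad1 C(2) by auto
    have "real (card {z \<in> Zs N. pt z \<in> ball (pt i) (5 * rad i)}) \<le> (2 * (5 * rad i) + 1) ^ ?d"
      using r1 by (intro card_lattice_ball) simp
    also have "\<dots> \<le> (11 * rad i) ^ ?d" using r1 by (intro power_mono) auto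
    finally show "real (card {z \<in> Zs N. pt z \<in> ball (pt i) (5 * rad i)}) \<le> (11 * rad i) ^ ?d" .
  qed
  finally have cardK: "real (card K) \<le> (\<Sum>i\<in>C. (11 * rad i) ^ ?d)" .
  have nn: "0 \<le> t * rad i ^ ?d" if "i \<in> C" for i using t rad1[of i] C(2) that by auto
  have "ennreal t * of_nat (card K) = ennreal (t * real (card K))"
    using t by (simp only: ennreal_of_nat_eq_real_of_nat[of "card K"] ennreal_mult[symmetric] of_nat_0_le_iff less_imp_le)
  also have "\<dots> \<le> ennreal (t * (\<Sum>i\<in>C. (11 * rad i) ^ ?d))"
    using t cardK by (intro ennreal_leI mult_left_mono) auto
  also have "t * (\<Sum>i\<in>C. (11 * rad i) ^ ?d) = 11 ^ ?d * (\<Sum>i\<in>C. t * rad i ^ ?d)"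
    by (simp add: sum_distrib_left power_mult_distrib mult_ac)
  also have "ennreal (11 ^ ?d * (\<Sum>i\<in>C. t * rad i ^ ?d)) = ennreal (11 ^ ?d) * ennreal (\<Sum>i\<in>C. t * rad i ^ ?d)"
    by (rule ennreal_mult) (auto intro: sum_nonneg nn)
  also have "ennreal (11 ^ ?d) = (11::ennreal) ^ ?d"
    by (simp add: ennreal_power[symmetric])
  also have "ennreal (\<Sum>i\<in>C. t * rad i ^ ?d) = (\<Sum>i\<in>C. ennreal (t * rad i ^ ?d))"
    by (rule sum_ennreal[symmetric]) (rule nn)
  also have "(\<Sum>i\<in>C. ennreal (t * rad i ^ ?d)) \<le> (\<Sum>i\<in>C. nu g Y (ball (pt i) (rad i)))"
  proof (rule sum_mono)
    fix i assume "i \<in> C"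
    then show "ennreal (t * rad i ^ ?d) \<le> nu g Y (ball (pt i) (rad i))"
      using rr[of i] C(2) unfolding rad_def by (auto intro: less_imp_le)
  qed
  also have "(\<Sum>i\<in>C. nu g Y (ball (pt i) (rad i))) = nu g Y (\<Union>i\<in>C. ball (pt i) (rad i))"
  proof (rule nu_sum_disjoint[OF finC])
    show "disjoint_family_on (\<lambda>i. ball (pt i) (rad i)) C"
      using C(3) unfolding disjoint_family_on_def pairwise_def disjnt_def by blast
  qed
  also have "\<dots> \<le> nu g Y (cbox (- (2 * real N) *\<^sub>R One) ((2 * real N) *\<^sub>R One))"
  proof (rule nu_mono, safe)
    fix i x assume i: "i \<in> C" and x: "x \<in> ball (pt i) (rad i)"
    have iZ: "i \<in> Zs N" using i C(2) KZ by auto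
    have ri: "rad i \<le> real N" using rad1 i C(2) by auto
    show "x \<in> cbox (- (2 * real N) *\<^sub>R One) ((2 * real N) *\<^sub>R One)"
      unfolding mem_box
    proof (intro ballI)
      fix b :: 'a assume b: "b \<in> Basis"
      have "\<bar>(x - pt i) \<bullet> b\<bar> \<le> norm (x - pt i)" using b by (rule Basis_le_norm)
      also have "\<dots> < rad i" using x by (simp add: dist_norm norm_minus_commute)
      finally have 1: "\<bar>x \<bullet> b - real_of_int (i b)\<bar> < rad i" using b by (simp add: inner_diff_left pt_inner)
      have "i b \<in> {- int N..int N}" using iZ b unfolding Zs_def by auto
      then have 2: "\<bar>real_of_int (i b)\<bar> \<le> real N" by auto
      have "\<bar>x \<bullet> b\<bar> \<le> 2 * real N" using 1 2 ri by linarith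
      then show "(- (2 * real N) *\<^sub>R One) \<bullet> b \<le> x \<bullet> b \<and> x \<bullet> b \<le> ((2 * real N) *\<^sub>R One) \<bullet> b"
        using b by (simp add: abs_le_iff)
    qed
  qed
  finally show ?thesis by (simp add: mult_left_mono)
qed

lemma shift_image_eq:
  assumes "\<A> \<subseteq> space (mpp_space :: ('a::euclidean_space \<times> 'k::second_countable_topology) set measure)"
  shows "shift \<tau> ` \<A> = shift (- \<tau>) -` \<A> \<inter> space (mpp_space :: ('a \<times> 'k) set measure)"
proof (intro equalityI subsetI)
  fix Y assume "Y \<in> shift \<tau> ` \<A>"
  then obtain Z where Z: "Z \<in> \<A>" "Y = shift \<tau> Z" by blast
  then have "shift (- \<tau>) Y \<in> \<A>" by (simp add: shift_inv)
  moreover have "Y \<in> space mpp_space" using Z assms by (auto simp: space_mpp admissible_shift)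
  ultimately show "Y \<in> shift (- \<tau>) -` \<A> \<inter> space (mpp_space :: ('a \<times> 'k) set measure)" by simp
next
  fix Y assume "Y \<in> shift (- \<tau>) -` \<A> \<inter> space (mpp_space :: ('a \<times> 'k) set measure)"
  then have "shift (- \<tau>) Y \<in> \<A>" by simp
  moreover have "Y = shift \<tau> (shift (- \<tau>) Y)" using shift_inv[of "- \<tau>" Y] by simp
  ultimately show "Y \<in> shift \<tau> ` \<A>" by blast
qed

lemma shift_image_sets:
  assumes "\<A> \<in> sets (mpp_space :: ('a::euclidean_space \<times> 'k::second_countable_topology) set measure)"
  shows "shift \<tau> ` \<A> \<in> sets (mpp_space :: ('a \<times> 'k) set measure)"
proof -
  have "shift \<tau> ` \<A> = shift (- \<tau>) -` \<A> \<inter> space (mpp_space :: ('a \<times> 'k) set measure)"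
    using assms sets.sets_into_space by (intro shift_image_eq) blast
  also have "\<dots> \<in> sets mpp_space" using measurable_sets[OF measurable_shift assms] .
  finally show ?thesis .
qed

locale statX =
  fixes M :: "'b measure" and X :: "'b \<Rightarrow> ('a::euclidean_space \<times> 'k::second_countable_topology) set"
  assumes prob: "prob_space M" and stat: "stationary_mpp M X"
begin

lemma X_meas: "X \<in> measurable M mpp_space"
  using stat unfolding stationary_mpp_def is_mpp_def by blast

lemma shiftX_meas: "(\<lambda>\<omega>. shift x (X \<omega>)) \<in> measurable M mpp_space"
  using measurable_comp[OF X_meas measurable_shift] by (simp add: comp_def)

lemma X_adm: "\<omega> \<in> space M \<Longrightarrow> admissible (X \<omega>)"
  using measurable_space[OF X_meas] by (auto simp: space_mpp)

lemma stat_emeasure: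
  assumes "S \<in> sets mpp_space"
  shows "emeasure M {\<omega>\<in>space M. shift x (X \<omega>) \<in> S} = emeasure M {\<omega>\<in>space M. X \<omega> \<in> S}"
proof -
  have "distr M mpp_space (\<lambda>\<omega>. shift x (X \<omega>)) = distr M mpp_space X"
    using stat unfolding stationary_mpp_def by blast
  then have "emeasure (distr M mpp_space (\<lambda>\<omega>. shift x (X \<omega>))) S = emeasure (distr M mpp_space X) S" by simp
  then show ?thesis
    using assms by (simp add: emeasure_distr[OF shiftX_meas] emeasure_distr[OF X_meas] vimage_def Int_def conj_commute)
qed

lemma inv_events_sets: "inv_events M X \<subseteq> sets M"
  unfolding inv_events_def using measurable_sets[OF X_meas] by blast

lemma inv_events_Pow: "inv_events M X \<subseteq> Pow (space M)"
  unfolding inv_events_def by blast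

lemma space_inv: "space (inv_sigma M X) = space M"
  unfolding inv_sigma_def by (rule space_measure_of[OF inv_events_Pow])

lemma sets_inv: "sets (inv_sigma M X) = sigma_sets (space M) (inv_events M X)"
  unfolding inv_sigma_def by (rule sets_measure_of[OF inv_events_Pow])

lemma subalg: "subalgebra M (inv_sigma M X)"
  unfolding subalgebra_def space_inv sets_inv
  using inv_events_sets by (simp add: sets.sigma_sets_subset)

end

context statX begin

interpretation P: prob_space M by (rule prob)

lemma X_pre: "S \<in> sets mpp_space \<Longrightarrow> {\<omega> \<in> space M. X \<omega> \<in> S} \<in> sets M"
proof -
  assume S: "S \<in> sets mpp_space"
  have eq: "{\<omega> \<in> space M. X \<omega> \<in> S} = X -` S \<inter> space M" by blast
  show ?thesis unfolding eq by (rule measurable_sets[OF X_meas S])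
qed

lemma inv_null:
  assumes A: "A \<in> sets mpp_space"
    and inv: "\<forall>\<tau>. measure M {\<omega> \<in> space M. X \<omega> \<in> (A - shift \<tau> ` A) \<union> (shift \<tau> ` A - A)} = 0"
  shows "{\<omega> \<in> space M. X \<omega> \<in> (A - shift \<tau> ` A) \<union> (shift \<tau> ` A - A)} \<in> null_sets M"
proof -
  have "(A - shift \<tau> ` A) \<union> (shift \<tau> ` A - A) \<in> sets mpp_space"
    using A shift_image_sets[OF A] by auto
  then have m: "{\<omega> \<in> space M. X \<omega> \<in> (A - shift \<tau> ` A) \<union> (shift \<tau> ` A - A)} \<in> sets M"
    by (rule X_pre)
  then show ?thesis using inv P.emeasure_eq_measure by (auto simp: null_sets_def)
qed

lemma Int_stable_inv: "Int_stable (inv_events M X)"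
proof (rule Int_stableI)
  fix a b assume "a \<in> inv_events M X" "b \<in> inv_events M X"
  then obtain A B where a: "a = X -` A \<inter> space M" and A: "A \<in> sets mpp_space"
      and iA: "\<forall>\<tau>. measure M {\<omega> \<in> space M. X \<omega> \<in> (A - shift \<tau> ` A) \<union> (shift \<tau> ` A - A)} = 0"
    and b: "b = X -` B \<inter> space M" and B: "B \<in> sets mpp_space"
      and iB: "\<forall>\<tau>. measure M {\<omega> \<in> space M. X \<omega> \<in> (B - shift \<tau> ` B) \<union> (shift \<tau> ` B - B)} = 0"
    unfolding inv_events_def by blast
  have "\<forall>\<tau>. measure M {\<omega> \<in> space M. X \<omega> \<in> ((A \<inter> B) - shift \<tau> ` (A \<inter> B)) \<union> (shift \<tau> ` (A \<inter> B) - (A \<inter> B))} = 0"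
  proof
    fix \<tau>
    let ?NA = "{\<omega> \<in> space M. X \<omega> \<in> (A - shift \<tau> ` A) \<union> (shift \<tau> ` A - A)}"
    let ?NB = "{\<omega> \<in> space M. X \<omega> \<in> (B - shift \<tau> ` B) \<union> (shift \<tau> ` B - B)}"
    have nA: "?NA \<in> null_sets M" by (rule inv_null[OF A iA])
    have nB: "?NB \<in> null_sets M" by (rule inv_null[OF B iB])
    have img: "shift \<tau> ` (A \<inter> B) = shift \<tau> ` A \<inter> shift \<tau> ` B"
      by (rule image_Int[OF inj_shift])
    have "{\<omega> \<in> space M. X \<omega> \<in> ((A \<inter> B) - shift \<tau> ` (A \<inter> B)) \<union> (shift \<tau> ` (A \<inter> B) - (A \<inter> B))} \<subseteq> ?NA \<union> ?NB"
      unfolding img by blast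
    moreover have "?NA \<union> ?NB \<in> null_sets M" using nA nB by auto
    ultimately have "{\<omega> \<in> space M. X \<omega> \<in> ((A \<inter> B) - shift \<tau> ` (A \<inter> B)) \<union> (shift \<tau> ` (A \<inter> B) - (A \<inter> B))} \<in> null_sets M"
    proof -
      have "((A \<inter> B) - shift \<tau> ` (A \<inter> B)) \<union> (shift \<tau> ` (A \<inter> B) - (A \<inter> B)) \<in> sets mpp_space"
        using A B shift_image_sets[of "A \<inter> B"] by auto
      then have "{\<omega> \<in> space M. X \<omega> \<in> ((A \<inter> B) - shift \<tau> ` (A \<inter> B)) \<union> (shift \<tau> ` (A \<inter> B) - (A \<inter> B))} \<in> sets M"
        by (rule X_pre)
      then show ?thesis using \<open>_ \<subseteq> ?NA \<union> ?NB\<close> \<open>?NA \<union> ?NB \<in> null_sets M\<close> by (rule null_sets_subset[rotated])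
    qed
    then show "measure M {\<omega> \<in> space M. X \<omega> \<in> ((A \<inter> B) - shift \<tau> ` (A \<inter> B)) \<union> (shift \<tau> ` (A \<inter> B) - (A \<inter> B))} = 0"
      by (simp add: measure_def null_setsD1 del: Un_iff Diff_iff)
  qed
  moreover have "a \<inter> b = X -` (A \<inter> B) \<inter> space M" using a b by auto
  moreover have "A \<inter> B \<in> sets mpp_space" using A B by auto
  ultimately show "a \<inter> b \<in> inv_events M X" unfolding inv_events_def by blast
qed

end

context statX begin

interpretation P: prob_space M by (rule prob)

lemma inv_stat:
  assumes E: "E \<in> sets (inv_sigma M X)" and S: "S \<in> sets mpp_space"
  shows "emeasure M (E \<inter> {\<omega>\<in>space M. shift x (X \<omega>) \<in> S}) = emeasure M (E \<inter> {\<omega>\<in>space M. X \<omega> \<in> S})"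
proof -
  define Sh where "Sh = {\<omega>\<in>space M. shift x (X \<omega>) \<in> S}"
  define S0 where "S0 = {\<omega>\<in>space M. X \<omega> \<in> S}"
  have Sh: "Sh \<in> sets M"
  proof -
    have eq: "Sh = (\<lambda>\<omega>. shift x (X \<omega>)) -` S \<inter> space M" unfolding Sh_def by blast
    show ?thesis unfolding eq by (rule measurable_sets[OF shiftX_meas S])
  qed
  have S0: "S0 \<in> sets M" unfolding S0_def by (rule X_pre[OF S])
  have ShS0: "emeasure M Sh = emeasure M S0" unfolding Sh_def S0_def by (rule stat_emeasure[OF S])
  have Esig: "E \<in> sigma_sets (space M) (inv_events M X)" using E sets_inv by simp
  have sig_sub: "sigma_sets (space M) (inv_events M X) \<subseteq> sets M"
    using inv_events_sets by (simp add: sets.sigma_sets_subset)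
  have "emeasure M (E \<inter> Sh) = emeasure M (E \<inter> S0)"
  proof (rule sigma_sets_induct_disjoint[OF Int_stable_inv inv_events_Pow Esig,
        where P="\<lambda>E. emeasure M (E \<inter> Sh) = emeasure M (E \<inter> S0)"])
    fix a assume "a \<in> inv_events M X"
    then obtain A where a: "a = X -` A \<inter> space M" and A: "A \<in> sets mpp_space"
      and iA: "\<forall>\<tau>. measure M {\<omega> \<in> space M. X \<omega> \<in> (A - shift \<tau> ` A) \<union> (shift \<tau> ` A - A)} = 0"
      unfolding inv_events_def by blast
    let ?N = "{\<omega> \<in> space M. X \<omega> \<in> (A - shift (- x) ` A) \<union> (shift (- x) ` A - A)}"
    have N: "?N \<in> null_sets M" by (rule inv_null[OF A iA])
    have img: "shift (- x) ` A = shift x -` A \<inter> space mpp_space"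
      using shift_image_eq[of A "- x"] A sets.sets_into_space by auto
    have AS: "A \<inter> S \<in> sets mpp_space" using A S by auto
    have m1: "a \<inter> Sh \<in> sets M" using a Sh measurable_sets[OF X_meas A] by auto
    have m2: "{\<omega>\<in>space M. shift x (X \<omega>) \<in> A \<inter> S} \<in> sets M"
    proof -
      have eq: "{\<omega>\<in>space M. shift x (X \<omega>) \<in> A \<inter> S} = (\<lambda>\<omega>. shift x (X \<omega>)) -` (A \<inter> S) \<inter> space M" by blast
      show ?thesis unfolding eq by (rule measurable_sets[OF shiftX_meas AS])
    qed
    have "emeasure M (a \<inter> Sh) = emeasure M {\<omega>\<in>space M. shift x (X \<omega>) \<in> A \<inter> S}"
    proof (rule emeasure_eq_AE[OF _ m1 m2])
      show "AE \<omega> in M. (\<omega> \<in> a \<inter> Sh) = (\<omega> \<in> {\<omega> \<in> space M. shift x (X \<omega>) \<in> A \<inter> S})"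
      proof (rule AE_I'[OF N], rule subsetI)
        fix \<omega> assume w: "\<omega> \<in> {\<omega> \<in> space M. \<not> ((\<omega> \<in> a \<inter> Sh) = (\<omega> \<in> {\<omega> \<in> space M. shift x (X \<omega>) \<in> A \<inter> S}))}"
        then have \<omega>: "\<omega> \<in> space M" by blast
        have adm: "X \<omega> \<in> space mpp_space" using X_adm[OF \<omega>] by (simp add: space_mpp)
        show "\<omega> \<in> ?N" using w \<omega> adm unfolding a Sh_def img by auto
      qed
    qed
    also have "\<dots> = emeasure M {\<omega>\<in>space M. X \<omega> \<in> A \<inter> S}" by (rule stat_emeasure[OF AS])
    also have "{\<omega>\<in>space M. X \<omega> \<in> A \<inter> S} = a \<inter> S0" unfolding a S0_def by auto
    finally show "emeasure M (a \<inter> Sh) = emeasure M (a \<inter> S0)" .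
  next
    show "emeasure M ({} \<inter> Sh) = emeasure M ({} \<inter> S0)" by simp
  next
    fix a assume a: "a \<in> sigma_sets (space M) (inv_events M X)"
      and IH: "emeasure M (a \<inter> Sh) = emeasure M (a \<inter> S0)"
    have aM: "a \<in> sets M" using a sig_sub by blast
    have "emeasure M ((space M - a) \<inter> Sh) = emeasure M (Sh - (a \<inter> Sh))" by (rule arg_cong[where f="emeasure M"]) (use Sh sets.sets_into_space in blast)
    also have "\<dots> = emeasure M Sh - emeasure M (a \<inter> Sh)"
      using aM Sh by (intro emeasure_Diff) auto
    also have "\<dots> = emeasure M S0 - emeasure M (a \<inter> S0)" using IH ShS0 by simp
    also have "\<dots> = emeasure M (S0 - (a \<inter> S0))"
      using aM S0 by (intro emeasure_Diff[symmetric]) auto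
    also have "\<dots> = emeasure M ((space M - a) \<inter> S0)" by (rule arg_cong[where f="emeasure M"]) (use S0 sets.sets_into_space in blast)
    finally show "emeasure M ((space M - a) \<inter> Sh) = emeasure M ((space M - a) \<inter> S0)" .
  next
    fix A :: "nat \<Rightarrow> 'b set" assume df: "disjoint_family A"
      and rA: "range A \<subseteq> sigma_sets (space M) (inv_events M X)"
      and IH: "\<And>i. emeasure M (A i \<inter> Sh) = emeasure M (A i \<inter> S0)"
    have AM: "A i \<in> sets M" for i using rA sig_sub by blast
    have "emeasure M ((\<Union>i. A i) \<inter> Sh) = emeasure M (\<Union>i. A i \<inter> Sh)" by simp
    also have "\<dots> = (\<Sum>i. emeasure M (A i \<inter> Sh))"
      using AM Sh df by (intro suminf_emeasure[symmetric]) (auto simp: disjoint_family_on_def)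
    also have "\<dots> = (\<Sum>i. emeasure M (A i \<inter> S0))" using IH by simp
    also have "\<dots> = emeasure M (\<Union>i. A i \<inter> S0)"
      using AM S0 df by (intro suminf_emeasure) (auto simp: disjoint_family_on_def)
    also have "\<dots> = emeasure M ((\<Union>i. A i) \<inter> S0)" by simp
    finally show "emeasure M ((\<Union>i. A i) \<inter> Sh) = emeasure M ((\<Union>i. A i) \<inter> S0)" .
  qed
  then show ?thesis unfolding Sh_def S0_def .
qed

end

definition Psi :: "('k \<Rightarrow> ennreal) \<Rightarrow> real \<Rightarrow> nat \<Rightarrow> ('a::euclidean_space \<times> 'k) set set" where
  "Psi g t N = {Y. admissible Y \<and> (\<exists>r\<in>{1..N}. ennreal (t * real r ^ DIM('a)) < nu g Y (ball 0 (real r)))}"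

lemma Psi_sets:
  fixes g :: "'k::second_countable_topology \<Rightarrow> ennreal"
  assumes g: "g \<in> borel_measurable borel"
  shows "(Psi g t N :: ('a::euclidean_space \<times> 'k) set set) \<in> sets mpp_space"
proof -
  have [measurable]: "(\<lambda>Y. nu g Y (ball 0 (real r))) \<in> borel_measurable (mpp_space :: ('a \<times> 'k) set measure)" for r
    by (rule measurable_nu[OF g]) simp
  have m: "{Y \<in> space (mpp_space :: ('a \<times> 'k) set measure). \<exists>r\<in>{1..N}. ennreal (t * real r ^ DIM('a)) < nu g Y (ball 0 (real r))} \<in> sets mpp_space"
    by measurable
  have e: "{Y \<in> space (mpp_space :: ('a \<times> 'k) set measure). \<exists>r\<in>{1..N}. ennreal (t * real r ^ DIM('a)) < nu g Y (ball 0 (real r))} = Psi g t N"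
    unfolding Psi_def space_mpp by blast
  show ?thesis using m unfolding e .
qed

lemma sum_indicator_ennreal: "finite A \<Longrightarrow> (\<Sum>z\<in>A. indicator B z :: ennreal) = of_nat (card (A \<inter> B))"
  by (simp add: indicator_def sum.If_cases Int_def)

context statX begin

interpretation P: prob_space M by (rule prob)

lemma pointwise_cover:
  fixes g :: "'k \<Rightarrow> ennreal"
  assumes t: "t > 0" and \<omega>: "\<omega> \<in> space M"
  shows "ennreal t * (\<Sum>z\<in>Zs N. indicator {\<omega>\<in>space M. shift (pt z) (X \<omega>) \<in> Psi g t N} \<omega> :: ennreal)
     \<le> 11 ^ DIM('a) * nu g (X \<omega>) (cbox (- (2 * real N) *\<^sub>R One) ((2 * real N) *\<^sub>R One))"
proof -
  let ?K = "{z \<in> Zs N. \<exists>r\<in>{1..N}. ennreal (t * real r ^ DIM('a)) < nu g (X \<omega>) (ball (pt z) (real r))}"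
  have "(\<Sum>z\<in>Zs N. indicator {\<omega>\<in>space M. shift (pt z) (X \<omega>) \<in> Psi g t N} \<omega> :: ennreal)
      = (\<Sum>z\<in>Zs N. indicator {z. \<exists>r\<in>{1..N}. ennreal (t * real r ^ DIM('a)) < nu g (X \<omega>) (ball (pt z) (real r))} z :: ennreal)"
    using \<omega> X_adm[OF \<omega>] by (intro sum.cong refl) (simp add: indicator_def Psi_def admissible_shift nu_shift_ball)
  also have "\<dots> = of_nat (card ?K)"
    by (subst sum_indicator_ennreal[OF finite_Zs]) (simp add: Int_def)
  finally have eq: "(\<Sum>z\<in>Zs N. indicator {\<omega>\<in>space M. shift (pt z) (X \<omega>) \<in> Psi g t N} \<omega> :: ennreal) = of_nat (card ?K)" .
  show ?thesis unfolding eq by (rule covering[OF t])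
qed

end

context statX begin

interpretation P: prob_space M by (rule prob)

lemma vol_Q: "emeasure lborel (cbox (- (2 * real N) *\<^sub>R One) ((2 * real N) *\<^sub>R (One :: 'c::euclidean_space)))
   = ennreal ((4 * real N) ^ DIM('c))"
proof -
  have "emeasure lborel (cbox (- (2 * real N) *\<^sub>R One) ((2 * real N) *\<^sub>R (One :: 'c)))
      = ennreal (\<Prod>b\<in>(Basis::'c set). 4 * real N)"
  proof -
    have "b \<in> Basis \<Longrightarrow> ((2 * real N) *\<^sub>R One - (- (2 * real N) *\<^sub>R (One::'c))) \<bullet> b = 4 * real N" for b
      by (simp add: inner_diff_left inner_add_left)
    then show ?thesis by (subst emeasure_lborel_cbox_eq) (auto intro!: prod.cong)
  qed
  then show ?thesis by simp
qed

lemma maximal: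
  fixes g :: "'k \<Rightarrow> ennreal" and E :: "'b set" and c :: ennreal and N :: nat
  assumes g: "g \<in> borel_measurable borel" and t: "t > 0"
    and E: "E \<in> sets (inv_sigma M X)"
    and intens: "\<And>B. B \<in> sets borel \<Longrightarrow> 0 < emeasure lborel B \<Longrightarrow> emeasure lborel B < \<infinity> \<Longrightarrow>
        (\<integral>\<^sup>+\<omega>. indicator E \<omega> * nu g (X \<omega>) B \<partial>M) = emeasure lborel B * c"
  shows "ennreal t * emeasure M (E \<inter> {\<omega>\<in>space M. X \<omega> \<in> Psi g t N}) \<le> 22 ^ DIM('a) * c"
proof (cases "N = 0")
  case True
  then have "Psi g t N = ({} :: ('a \<times> 'k) set set)" unfolding Psi_def by auto
  then show ?thesis by simp
next
  case False
  let ?d = "DIM('a)"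
  let ?Q = "cbox (- (2 * real N) *\<^sub>R One) ((2 * real N) *\<^sub>R (One :: 'a))"
  define F where "F z = {\<omega>\<in>space M. shift (pt z) (X \<omega>) \<in> Psi g t N}" for z
  define F0X where "F0X = {\<omega>\<in>space M. X \<omega> \<in> Psi g t N}"
  have EM: "E \<in> sets M" using E subalg unfolding subalgebra_def by blast
  have PS: "Psi g t N \<in> sets mpp_space" by (rule Psi_sets[OF g])
  have FM: "F z \<in> sets M" for z
  proof -
    have eq: "F z = (\<lambda>\<omega>. shift (pt z) (X \<omega>)) -` Psi g t N \<inter> space M" unfolding F_def by blast
    show ?thesis unfolding eq by (rule measurable_sets[OF shiftX_meas PS])
  qed
  have F0M: "F0X \<in> sets M" unfolding F0X_def by (rule X_pre[OF PS])
  have nuQ[measurable]: "(\<lambda>\<omega>. nu g (X \<omega>) ?Q) \<in> borel_measurable M"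
    using measurable_compose[OF X_meas measurable_nu[OF g, of ?Q]] by simp
  have volQ: "emeasure lborel ?Q = ennreal ((4 * real N) ^ ?d)" by (rule vol_Q)
  have "(\<integral>\<^sup>+\<omega>. indicator E \<omega> * (ennreal t * (\<Sum>z\<in>Zs N. indicator (F z) \<omega> :: ennreal)) \<partial>M)
      \<le> (\<integral>\<^sup>+\<omega>. indicator E \<omega> * (11 ^ ?d * nu g (X \<omega>) ?Q) \<partial>M)"
    unfolding F_def by (intro nn_integral_mono mult_left_mono pointwise_cover[OF t]) auto
  also have "\<dots> = 11 ^ ?d * (\<integral>\<^sup>+\<omega>. indicator E \<omega> * nu g (X \<omega>) ?Q \<partial>M)"
  proof -
    have [measurable]: "E \<in> sets M" by (rule EM)
    have "(\<lambda>\<omega>. indicator E \<omega> * nu g (X \<omega>) ?Q) \<in> borel_measurable M" by measurable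
    then show ?thesis by (subst nn_integral_cmult[symmetric]) (auto simp: mult_ac)
  qed
  also have "\<dots> = 11 ^ ?d * (ennreal ((4 * real N) ^ ?d) * c)"
  proof -
    have vpos: "0 < emeasure lborel ?Q" unfolding volQ using False by simp
    have vfin: "emeasure lborel ?Q < \<infinity>" unfolding volQ by simp
    have "(\<integral>\<^sup>+\<omega>. indicator E \<omega> * nu g (X \<omega>) ?Q \<partial>M) = emeasure lborel ?Q * c"
      by (rule intens[OF _ vpos vfin]) simp
    then show ?thesis unfolding volQ by simp
  qed
  finally have ineq1: "(\<integral>\<^sup>+\<omega>. indicator E \<omega> * (ennreal t * (\<Sum>z\<in>Zs N. indicator (F z) \<omega> :: ennreal)) \<partial>M)
      \<le> 11 ^ ?d * (ennreal ((4 * real N) ^ ?d) * c)" .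
  have "(\<integral>\<^sup>+\<omega>. indicator E \<omega> * (ennreal t * (\<Sum>z\<in>Zs N. indicator (F z) \<omega> :: ennreal)) \<partial>M)
      = ennreal t * (\<Sum>z\<in>Zs N. (\<integral>\<^sup>+\<omega>. indicator (E \<inter> F z) \<omega> \<partial>M))"
  proof -
    have "(\<integral>\<^sup>+\<omega>. indicator E \<omega> * (ennreal t * (\<Sum>z\<in>Zs N. indicator (F z) \<omega> :: ennreal)) \<partial>M)
        = (\<integral>\<^sup>+\<omega>. ennreal t * (\<Sum>z\<in>Zs N. indicator (E \<inter> F z) \<omega>) \<partial>M)"
      by (intro nn_integral_cong) (simp add: sum_distrib_left indicator_inter_arith mult_ac)
    also have "\<dots> = ennreal t * (\<integral>\<^sup>+\<omega>. (\<Sum>z\<in>Zs N. indicator (E \<inter> F z) \<omega>) \<partial>M)"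
      using EM FM by (intro nn_integral_cmult) auto
    also have "(\<integral>\<^sup>+\<omega>. (\<Sum>z\<in>Zs N. indicator (E \<inter> F z) \<omega>) \<partial>M) = (\<Sum>z\<in>Zs N. (\<integral>\<^sup>+\<omega>. indicator (E \<inter> F z) \<omega> \<partial>M))"
      using EM FM by (intro nn_integral_sum) auto
    finally show ?thesis .
  qed
  also have "\<dots> = ennreal t * (\<Sum>z\<in>(Zs N :: ('a \<Rightarrow> int) set). emeasure M (E \<inter> F0X))"
  proof -
    have "(\<integral>\<^sup>+\<omega>. indicator (E \<inter> F z) \<omega> \<partial>M) = emeasure M (E \<inter> F0X)" for z
      using EM FM inv_stat[OF E PS, of "pt z"] unfolding F_def F0X_def by simp
    then show ?thesis by simp
  qed
  also have "\<dots> = of_nat ((2 * N + 1) ^ ?d) * (ennreal t * emeasure M (E \<inter> F0X))"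
    by (simp add: card_Zs mult_ac)
  finally have ineq2: "of_nat ((2 * N + 1) ^ ?d) * (ennreal t * emeasure M (E \<inter> F0X)) \<le> 11 ^ ?d * (ennreal ((4 * real N) ^ ?d) * c)"
    using ineq1 by simp
  have "ennreal ((4 * real N) ^ ?d) \<le> 2 ^ ?d * of_nat ((2 * N + 1) ^ ?d)"
  proof -
    have "(4 * real N) ^ ?d \<le> (2 * (2 * real N + 1)) ^ ?d" by (intro power_mono) auto
    also have "\<dots> = 2 ^ ?d * real ((2 * N + 1) ^ ?d)" by (simp only: power_mult_distrib of_nat_power) (simp add: add.commute)
    finally have "ennreal ((4 * real N) ^ ?d) \<le> ennreal (2 ^ ?d * real ((2 * N + 1) ^ ?d))" by (rule ennreal_leI)
    also have "\<dots> = 2 ^ ?d * of_nat ((2 * N + 1) ^ ?d)"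
      by (simp add: ennreal_mult ennreal_power[symmetric] ennreal_of_nat_eq_real_of_nat)
    finally show ?thesis .
  qed
  then have "11 ^ ?d * (ennreal ((4 * real N) ^ ?d) * c) \<le> 11 ^ ?d * ((2 ^ ?d * of_nat ((2 * N + 1) ^ ?d)) * c)"
    by (intro mult_left_mono mult_right_mono) auto
  also have "\<dots> = of_nat ((2 * N + 1) ^ ?d) * (22 ^ ?d * c)"
  proof -
    have e: "(11::ennreal) ^ ?d * (2 ^ ?d * x) = 22 ^ ?d * x" for x
      by (simp add: mult.assoc[symmetric] power_mult_distrib[symmetric])
    have "11 ^ ?d * ((2 ^ ?d * of_nat ((2 * N + 1) ^ ?d)) * c) = (11::ennreal) ^ ?d * (2 ^ ?d * (of_nat ((2 * N + 1) ^ ?d) * c))"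
      by (simp only: mult.assoc)
    also have "\<dots> = 22 ^ ?d * (of_nat ((2 * N + 1) ^ ?d) * c)" by (rule e)
    finally show ?thesis by (simp only: mult.left_commute)
  qed
  finally have "of_nat ((2 * N + 1) ^ ?d) * (ennreal t * emeasure M (E \<inter> F0X)) \<le> of_nat ((2 * N + 1) ^ ?d) * (22 ^ ?d * c)"
    using ineq2 by (rule order_trans[rotated])
  moreover have nz: "of_nat ((2 * N + 1) ^ ?d) \<noteq> (0::ennreal)" by simp
  moreover have nt: "of_nat ((2 * N + 1) ^ ?d) \<noteq> (top::ennreal)" by (rule ennreal_of_nat_neq_top)
  ultimately show ?thesis unfolding F0X_def
    using ennreal_mult_le_mult_iff[OF nz nt] by blast
qed

end

context statX begin

interpretation P: prob_space M by (rule prob)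

interpretation FS: finite_measure_subalgebra M "inv_sigma M X"
  by unfold_locales (rule subalg)

lemma intensity:
  fixes psi :: "'b \<Rightarrow> 'k measure" and g :: "'k \<Rightarrow> ennreal"
  assumes psi: "is_psi M X psi" and g: "g \<in> borel_measurable borel"
    and E: "E \<in> sets (inv_sigma M X)" and B: "B \<in> sets borel"
    and pos: "0 < emeasure lborel B" and fin: "emeasure lborel B < \<infinity>"
  shows "(\<integral>\<^sup>+\<omega>. indicator E \<omega> * nu g (X \<omega>) B \<partial>M)
       = emeasure lborel B * (\<integral>\<^sup>+\<omega>. indicator E \<omega> * (\<integral>\<^sup>+ k. g k \<partial>psi \<omega>) \<partial>M)"
proof -
  let ?v = "emeasure lborel B"
  define f where "f \<omega> = nu g (X \<omega>) B / ?v" for \<omega>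
  have nuM: "(\<lambda>\<omega>. nu g (X \<omega>) B) \<in> borel_measurable M"
    using measurable_compose[OF X_meas measurable_nu[OF g B]] by simp
  then have fM: "f \<in> borel_measurable M" unfolding f_def by measurable
  have AEf: "AE \<omega> in M. nn_cond_exp M (inv_sigma M X) f \<omega> = (\<integral>\<^sup>+ k. g k \<partial>psi \<omega>)"
    using psi g B pos fin unfolding is_psi_def f_def nu_def by blast
  have EF: "indicator E \<in> borel_measurable (inv_sigma M X)" using E by simp
  have "(\<integral>\<^sup>+\<omega>. indicator E \<omega> * f \<omega> \<partial>M) = (\<integral>\<^sup>+\<omega>. indicator E \<omega> * nn_cond_exp M (inv_sigma M X) f \<omega> \<partial>M)"
    by (rule FS.nn_cond_exp_intg[OF EF fM, symmetric])
  also have "\<dots> = (\<integral>\<^sup>+\<omega>. indicator E \<omega> * (\<integral>\<^sup>+ k. g k \<partial>psi \<omega>) \<partial>M)"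
    using AEf by (intro nn_integral_cong_AE) auto
  finally have 1: "(\<integral>\<^sup>+\<omega>. indicator E \<omega> * f \<omega> \<partial>M) = (\<integral>\<^sup>+\<omega>. indicator E \<omega> * (\<integral>\<^sup>+ k. g k \<partial>psi \<omega>) \<partial>M)" .
  have EM: "E \<in> sets M" using E subalg unfolding subalgebra_def by blast
  have "(\<integral>\<^sup>+\<omega>. indicator E \<omega> * nu g (X \<omega>) B \<partial>M) = (\<integral>\<^sup>+\<omega>. (indicator E \<omega> * f \<omega>) * ?v \<partial>M)"
  proof (intro nn_integral_cong)
    fix \<omega>
    have "f \<omega> * ?v = nu g (X \<omega>) B"
      unfolding f_def ennreal_divide_times using pos fin by simp
    then show "indicator E \<omega> * nu g (X \<omega>) B = indicator E \<omega> * f \<omega> * ?v" by (simp add: mult.assoc)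
  qed
  also have "\<dots> = (\<integral>\<^sup>+\<omega>. indicator E \<omega> * f \<omega> \<partial>M) * ?v"
  proof (intro nn_integral_multc)
    have [measurable]: "E \<in> sets M" by (rule EM)
    show "(\<lambda>\<omega>. indicator E \<omega> * f \<omega>) \<in> borel_measurable M" using fM by measurable
  qed
  finally show ?thesis unfolding 1 by (simp add: mult.commute)
qed

end

lemma Psi_mono: "N \<le> N' \<Longrightarrow> Psi g t N \<subseteq> Psi g t N'"
  unfolding Psi_def by auto

definition gM :: "('k \<Rightarrow> real) \<Rightarrow> nat \<Rightarrow> 'k \<Rightarrow> ennreal" where
  "gM h m k = ennreal (max (h k - real m) 0)"

lemma gM_meas: "h \<in> borel_measurable borel \<Longrightarrow> gM h m \<in> borel_measurable borel"
  unfolding gM_def by (intro measurable_compose[OF _ measurable_ennreal] borel_measurable_max borel_measurable_diff measurable_const) auto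

lemma gM_0: "(\<And>k. h k \<ge> 0) \<Longrightarrow> gM h 0 = (\<lambda>k. ennreal (h k))"
  unfolding gM_def by (rule ext) (metis diff_zero max.absorb1 of_nat_0)

lemma gM_dec: "gM h (Suc m) k \<le> gM h m k"
  unfolding gM_def by (intro ennreal_leI) auto

lemma gM_INF: "(INF m. gM h m k) = 0"
proof -
  have "(INF m. gM h m k) \<le> gM h (nat \<lceil>h k\<rceil>) k" by (rule INF_lower) simp
  also have "gM h (nat \<lceil>h k\<rceil>) k = 0"
    unfolding gM_def by (simp add: max_def) linarith
  finally show ?thesis by simp
qed

lemma psi_INF:
  fixes N :: "'k::topological_space measure"
  assumes sN: "sets N = sets borel" and h: "h \<in> borel_measurable borel" and hnn: "\<And>k. h k \<ge> 0"
    and fin: "(\<integral>\<^sup>+ k. ennreal (h k) \<partial>N) < \<infinity>"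
  shows "(INF m. (\<integral>\<^sup>+ k. gM h m k \<partial>N)) = 0"
proof -
  have m: "gM h m \<in> borel_measurable N" for m
    using gM_meas[OF h] measurable_cong_sets[OF sN refl] by blast
  have "(\<integral>\<^sup>+ k. (INF m. gM h m k) \<partial>N) = (INF m. (\<integral>\<^sup>+ k. gM h m k \<partial>N))"
  proof (rule nn_integral_monotone_convergence_INF_AE[where i=0])
    show "AE x in N. gM h (Suc i) x \<le> gM h i x" for i by (simp add: gM_dec)
    show "gM h i \<in> borel_measurable N" for i by (rule m)
    show "(\<integral>\<^sup>+ x. gM h 0 x \<partial>N) < \<infinity>" using fin by (simp add: gM_0[OF hnn])
  qed
  then show ?thesis by (simp add: gM_INF)
qed

context statX begin

interpretation P: prob_space M by (rule prob)

lemma main_prob: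
  fixes psi :: "'b \<Rightarrow> 'k measure" and h :: "'k \<Rightarrow> real"
  assumes psi: "is_psi M X psi" and h: "h \<in> borel_measurable borel" and hnn: "\<And>k. h k \<ge> 0"
    and fin: "AE \<omega> in M. (\<integral>\<^sup>+ k. ennreal (h k) \<partial>psi \<omega>) < \<infinity>" and t: "t > 0"
  shows "AE \<omega> in M. \<exists>m. \<forall>N. X \<omega> \<notin> Psi (gM h m) t N"
proof -
  let ?d = "DIM('a)"
  define B1 where "B1 = cbox (0::'a) One"
  have B1: "B1 \<in> sets borel" unfolding B1_def by simp
  have volB1: "emeasure lborel B1 = 1"
    unfolding B1_def by (subst emeasure_lborel_cbox_eq) auto
  define C where "C m = nn_cond_exp M (inv_sigma M X) (\<lambda>\<omega>. nu (gM h m) (X \<omega>) B1 / emeasure lborel B1)" for m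
  have Cpsi: "AE \<omega> in M. \<forall>m. C m \<omega> = (\<integral>\<^sup>+ k. gM h m k \<partial>psi \<omega>)"
    unfolding AE_all_countable
  proof
    fix m
    show "AE \<omega> in M. C m \<omega> = (\<integral>\<^sup>+ k. gM h m k \<partial>psi \<omega>)"
    proof -
      have p3: "\<And>f A. f \<in> borel_measurable borel \<Longrightarrow> A \<in> sets borel \<Longrightarrow> 0 < emeasure lborel A \<Longrightarrow> emeasure lborel A < \<infinity> \<Longrightarrow>
        (AE \<omega> in M. nn_cond_exp M (inv_sigma M X)
            (\<lambda>\<omega>. (\<integral>\<^sup>+ p. f (snd p) \<partial>count_space {p \<in> X \<omega>. fst p \<in> A}) / emeasure lborel A) \<omega>
          = (\<integral>\<^sup>+ k. f k \<partial>psi \<omega>))"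
        using psi unfolding is_psi_def by blast
      show ?thesis unfolding C_def nu_def by (rule p3[OF gM_meas[OF h] B1]) (simp_all add: volB1)
    qed
  qed
  have CF: "C m \<in> borel_measurable (inv_sigma M X)" for m unfolding C_def by simp
  have CM[measurable]: "C m \<in> borel_measurable M" for m unfolding C_def by simp
  define E where "E K = {\<omega> \<in> space M. C 0 \<omega> \<le> of_nat K}" for K :: nat
  have EF: "E K \<in> sets (inv_sigma M X)" for K
  proof -
    have "{\<omega> \<in> space (inv_sigma M X). C 0 \<omega> \<le> of_nat K} \<in> sets (inv_sigma M X)"
      using CF[of 0] by measurable
    then show ?thesis unfolding E_def space_inv .
  qed
  have EM[measurable]: "E K \<in> sets M" for K using EF[of K] subalg unfolding subalgebra_def by blast
  define c where "c m K = (\<integral>\<^sup>+\<omega>. indicator (E K) \<omega> * C m \<omega> \<partial>M)" for m K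
  have maxi: "ennreal t * emeasure M (E K \<inter> {\<omega>\<in>space M. X \<omega> \<in> Psi (gM h m) t N}) \<le> 22 ^ ?d * c m K" for m K N
  proof (rule maximal[OF gM_meas[OF h] t EF])
    fix B :: "'a set" assume B: "B \<in> sets borel" "0 < emeasure lborel B" "emeasure lborel B < \<infinity>"
    have "(\<integral>\<^sup>+\<omega>. indicator (E K) \<omega> * nu (gM h m) (X \<omega>) B \<partial>M)
        = emeasure lborel B * (\<integral>\<^sup>+\<omega>. indicator (E K) \<omega> * (\<integral>\<^sup>+ k. gM h m k \<partial>psi \<omega>) \<partial>M)"
      by (rule intensity[OF psi gM_meas[OF h] EF B])
    also have "(\<integral>\<^sup>+\<omega>. indicator (E K) \<omega> * (\<integral>\<^sup>+ k. gM h m k \<partial>psi \<omega>) \<partial>M) = c m K"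
      unfolding c_def using Cpsi by (intro nn_integral_cong_AE) auto
    finally show "(\<integral>\<^sup>+\<omega>. indicator (E K) \<omega> * nu (gM h m) (X \<omega>) B \<partial>M) = emeasure lborel B * c m K" .
  qed
  define Bad where "Bad m = (\<Union>N. {\<omega>\<in>space M. X \<omega> \<in> Psi (gM h m) t N})" for m
  have PsiS: "Psi (gM h m) t N \<in> sets mpp_space" for m N by (rule Psi_sets[OF gM_meas[OF h]])
  have BadN: "{\<omega>\<in>space M. X \<omega> \<in> Psi (gM h m) t N} \<in> sets M" for m N by (rule X_pre[OF PsiS])
  have BadM: "Bad m \<in> sets M" for m unfolding Bad_def using BadN by blast
  have badsup: "ennreal t * emeasure M (E K \<inter> Bad m) \<le> 22 ^ ?d * c m K" for m K
  proof -
    have "E K \<inter> Bad m = (\<Union>N. E K \<inter> {\<omega>\<in>space M. X \<omega> \<in> Psi (gM h m) t N})" unfolding Bad_def by blast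
    also have "emeasure M \<dots> = (SUP N. emeasure M (E K \<inter> {\<omega>\<in>space M. X \<omega> \<in> Psi (gM h m) t N}))"
    proof (rule SUP_emeasure_incseq[symmetric])
      show "range (\<lambda>N. E K \<inter> {\<omega>\<in>space M. X \<omega> \<in> Psi (gM h m) t N}) \<subseteq> sets M" using BadN EM by blast
      show "incseq (\<lambda>N. E K \<inter> {\<omega>\<in>space M. X \<omega> \<in> Psi (gM h m) t N})"
        unfolding incseq_def using Psi_mono by blast
    qed
    finally have eq: "emeasure M (E K \<inter> Bad m) = (SUP N. emeasure M (E K \<inter> {\<omega>\<in>space M. X \<omega> \<in> Psi (gM h m) t N}))" .
    show ?thesis unfolding eq SUP_mult_left_ennreal by (rule SUP_least) (rule maxi)
  qed
  have clim: "(\<lambda>m. c m K) \<longlonglongrightarrow> 0" for K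
  proof -
    define f where "f m \<omega> = indicator (E K) \<omega> * C m \<omega>" for m \<omega>
    have fM[measurable]: "f m \<in> borel_measurable M" for m unfolding f_def by measurable
    have fdec: "AE \<omega> in M. f (Suc m) \<omega> \<le> f m \<omega>" for m
      using Cpsi unfolding f_def
      by eventually_elim (auto intro!: mult_left_mono nn_integral_mono gM_dec)
    have fbound: "f 0 \<omega> \<le> of_nat K" for \<omega> unfolding f_def E_def by (auto simp: indicator_def)
    have f0fin: "(\<integral>\<^sup>+\<omega>. f 0 \<omega> \<partial>M) < \<infinity>"
    proof -
      have "(\<integral>\<^sup>+\<omega>. f 0 \<omega> \<partial>M) \<le> (\<integral>\<^sup>+\<omega>. of_nat K \<partial>M)" by (intro nn_integral_mono fbound)
      also have "\<dots> = of_nat K" by (simp add: P.emeasure_space_1)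
      finally show ?thesis by (simp add: le_less_trans of_nat_less_top)
    qed
    have INF0: "AE \<omega> in M. (INF m. f m \<omega>) = 0"
      using Cpsi fin
    proof eventually_elim
      case (elim \<omega>)
      show ?case
      proof (cases "\<omega> \<in> E K")
        case True
        have "\<omega> \<in> space M" using True unfolding E_def by blast
        then have sp: "sets (psi \<omega>) = sets borel" using psi unfolding is_psi_def by blast
        have "(INF m. f m \<omega>) = (INF m. (\<integral>\<^sup>+ k. gM h m k \<partial>psi \<omega>))" using True elim(1) unfolding f_def by simp
        also have "\<dots> = 0" by (rule psi_INF[OF sp h hnn elim(2)])
        finally show ?thesis .
      next
        case False then show ?thesis unfolding f_def by simp
      qed
    qed
    have "(INF m. c m K) = (INF m. (\<integral>\<^sup>+\<omega>. f m \<omega> \<partial>M))" unfolding c_def f_def by simp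
    also have "\<dots> = (\<integral>\<^sup>+\<omega>. (INF m. f m \<omega>) \<partial>M)"
      by (rule nn_integral_monotone_convergence_INF_AE[symmetric, where i=0, OF fdec fM f0fin])
    also have "\<dots> = (\<integral>\<^sup>+\<omega>. 0 \<partial>M)" using INF0 by (rule nn_integral_cong_AE)
    finally have INFc: "(INF m. c m K) = 0" by simp
    have "decseq (\<lambda>m. c m K)"
    proof (rule decseq_SucI)
      fix m show "c (Suc m) K \<le> c m K"
        unfolding c_def using fdec unfolding f_def by (rule nn_integral_mono_AE)
    qed
    from LIMSEQ_INF[OF this] show ?thesis unfolding INFc .
  qed
  have Znull: "E K \<inter> (\<Inter>m. Bad m) \<in> null_sets M" for K
  proof -
    have ZM: "E K \<inter> (\<Inter>m. Bad m) \<in> sets M" using EM BadM by blast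
    have "ennreal t * emeasure M (E K \<inter> (\<Inter>m. Bad m)) \<le> 22 ^ ?d * c m K" for m
    proof -
      have "emeasure M (E K \<inter> (\<Inter>m. Bad m)) \<le> emeasure M (E K \<inter> Bad m)"
        using EM BadM by (intro emeasure_mono) auto
      then have "ennreal t * emeasure M (E K \<inter> (\<Inter>m. Bad m)) \<le> ennreal t * emeasure M (E K \<inter> Bad m)"
        by (rule mult_left_mono) simp
      then show ?thesis using badsup[of K m] by (rule order_trans)
    qed
    moreover have "(\<lambda>m. 22 ^ ?d * c m K) \<longlonglongrightarrow> 22 ^ ?d * 0"
      by (rule ennreal_tendsto_cmult[OF _ clim]) (simp add: power_less_top_ennreal)
    ultimately have "ennreal t * emeasure M (E K \<inter> (\<Inter>m. Bad m)) \<le> 22 ^ ?d * 0"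
      by (intro LIMSEQ_le_const[where X="\<lambda>m. 22 ^ ?d * c m K"]) auto
    then have "emeasure M (E K \<inter> (\<Inter>m. Bad m)) = 0" using t by auto
    then show ?thesis using ZM by (simp add: null_sets_def)
  qed
  have "AE \<omega> in M. \<omega> \<notin> (\<Union>K. E K \<inter> (\<Inter>m. Bad m))"
    by (rule AE_not_in) (intro null_sets_UN Znull)
  then show ?thesis using Cpsi fin AE_space
  proof eventually_elim
    case (elim \<omega>)
    have "C 0 \<omega> = (\<integral>\<^sup>+ k. ennreal (h k) \<partial>psi \<omega>)" using elim(2) by (simp add: gM_0[OF hnn])
    then have "C 0 \<omega> < top" using elim(3) by simp
    then obtain K where "C 0 \<omega> < of_nat K" using ennreal_Ex_less_of_nat by blast
    then have "\<omega> \<in> E K" unfolding E_def using elim(4) by auto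
    then have "\<omega> \<notin> (\<Inter>m. Bad m)" using elim(1) by blast
    then obtain m where "\<omega> \<notin> Bad m" by blast
    then show ?case unfolding Bad_def using elim(4) by blast
  qed
qed

end

lemma mark_mem:
  assumes adm: "admissible Y" and z: "z \<in> fst ` Y"
  shows "(z, mark Y z) \<in> Y"
proof -
  obtain k where k: "(z, k) \<in> Y" using z by force
  have u: "\<And>k'. (z, k') \<in> Y \<Longrightarrow> k' = k" using adm k unfolding admissible_def by blast
  have "mark Y z = k" unfolding mark_def by (rule the_equality[where P="\<lambda>k. (z, k) \<in> Y", OF k u])
  then show ?thesis using k by simp
qed

lemma subsum:
  fixes Y :: "('a::real_normed_vector \<times> 'k) set" and g :: "'k \<Rightarrow> ennreal"
  assumes adm: "admissible Y" and I: "I \<subseteq> fst ` Y \<inter> ball 0 \<rho>"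
  shows "(\<Sum>z\<in>I. g (mark Y z)) \<le> nu g Y (ball 0 \<rho>)"
proof -
  have finI: "finite I" using adm I unfolding admissible_def by (meson bounded_ball finite_subset)
  let ?T = "(\<lambda>z. (z, mark Y z)) ` I"
  have T: "?T \<subseteq> {p \<in> Y. fst p \<in> ball 0 \<rho>}" proof
    fix p assume "p \<in> ?T"
    then obtain z where z: "z \<in> I" "p = (z, mark Y z)" by blast
    then have "z \<in> fst ` Y" "z \<in> ball 0 \<rho>" using I by auto
    then show "p \<in> {p \<in> Y. fst p \<in> ball 0 \<rho>}" using z mark_mem[OF adm] by simp
  qed
  have inj: "inj_on (\<lambda>z. (z, mark Y z)) I" by (auto intro: inj_onI)
  have "(\<Sum>z\<in>I. g (mark Y z)) = (\<Sum>p\<in>?T. g (snd p))"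
    by (subst sum.reindex[OF inj]) simp
  also have "\<dots> = (\<integral>\<^sup>+ p. g (snd p) \<partial>count_space ?T)"
    using finI by (simp add: nn_integral_count_space_finite)
  also have "\<dots> = (\<integral>\<^sup>+ p. g (snd p) * indicator ?T p \<partial>count_space UNIV)"
    by (rule nn_integral_count_space_indicator) simp
  also have "\<dots> \<le> (\<integral>\<^sup>+ p. g (snd p) * indicator {p \<in> Y. fst p \<in> ball 0 \<rho>} p \<partial>count_space UNIV)"
    using T by (intro nn_integral_mono mult_left_mono) (auto simp: indicator_def)
  also have "\<dots> = nu g Y (ball 0 \<rho>)" by (simp add: nu_UNIV)
  finally show ?thesis .
qed

lemma good_bound:
  fixes Y :: "('a::euclidean_space \<times> 'k) set"
  assumes adm: "admissible Y" and g: "\<forall>N. Y \<notin> Psi G t N" and r: "1 \<le> r"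
  shows "nu G Y (ball 0 (real r)) \<le> ennreal (t * real r ^ DIM('a))"
proof -
  have "Y \<notin> Psi G t r" using g by blast
  then have "\<not> ennreal (t * real r ^ DIM('a)) < nu G Y (ball 0 (real r))"
    using adm r unfolding Psi_def by auto
  then show ?thesis by (simp add: not_less)
qed

lemma pathwise:
  fixes Y :: "('a::euclidean_space \<times> 'k) set" and I :: "real \<Rightarrow> 'a set" and h :: "'k \<Rightarrow> real" and A :: "'a set"
  assumes adm: "admissible Y" and hnn: "\<And>k. h k \<ge> 0" and bA: "bounded A"
    and Isub: "\<And>\<epsilon>. \<epsilon> > 0 \<Longrightarrow> I \<epsilon> \<subseteq> fst ` Y \<inter> (\<lambda>a. inverse \<epsilon> *\<^sub>R a) ` A"
    and card: "((\<lambda>\<epsilon>. \<epsilon> ^ DIM('a) * real (card (I \<epsilon>))) \<longlongrightarrow> 0) (at_right 0)"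
    and good: "\<forall>n::nat. \<exists>m. \<forall>N. Y \<notin> Psi (gM h m) (1 / real (Suc n)) N"
  shows "((\<lambda>\<epsilon>. \<epsilon> ^ DIM('a) * (\<Sum>z\<in>I \<epsilon>. h (mark Y z))) \<longlongrightarrow> 0) (at_right 0)"
proof (rule tendstoI)
  let ?d = "DIM('a)"
  obtain R where R: "R > 0" "A \<subseteq> ball 0 R" using bounded_subset_ballD[OF bA] by blast
  fix e :: real assume e: "e > 0"
  have "0 < e / (2 * (2 * R) ^ ?d)" using e R by simp
  then obtain n0 where n0: "n0 > 0" "inverse (real n0) < e / (2 * (2 * R) ^ ?d)"
    using ex_inverse_of_nat_less by blast
  define n where "n = n0 - 1"
  define t where "t = 1 / real (Suc n)"
  have t: "t > 0" "t < e / (2 * (2 * R) ^ ?d)" using n0 unfolding t_def n_def by (auto simp: inverse_eq_divide)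
  obtain m where m: "\<forall>N. Y \<notin> Psi (gM h m) t N" using good unfolding t_def by blast
  have ev1: "eventually (\<lambda>\<epsilon>. \<epsilon> ^ ?d * real (card (I \<epsilon>)) < e / (2 * (real m + 1))) (at_right 0)"
    using e by (intro order_tendstoD(2)[OF card]) simp
  have ev2: "eventually (\<lambda>\<epsilon>. 0 < \<epsilon> \<and> \<epsilon> < R) (at_right (0::real))"
    unfolding eventually_at_right_field using R by blast
  show "eventually (\<lambda>\<epsilon>. dist (\<epsilon> ^ ?d * (\<Sum>z\<in>I \<epsilon>. h (mark Y z))) 0 < e) (at_right 0)"
    using ev1 ev2
  proof eventually_elim
    case (elim \<epsilon>)
    then have \<epsilon>: "0 < \<epsilon>" "\<epsilon> < R" and cd: "\<epsilon> ^ ?d * real (card (I \<epsilon>)) < e / (2 * (real m + 1))" by auto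
    define r where "r = nat \<lceil>R / \<epsilon>\<rceil>"
    have Rge: "1 < R / \<epsilon>" using \<epsilon> by simp
    have r1: "1 \<le> r" unfolding r_def using Rge by linarith
    have rge: "R / \<epsilon> \<le> real r" unfolding r_def by linarith
    have rle: "real r \<le> 2 * R / \<epsilon>"
    proof -
      have "real r \<le> R / \<epsilon> + 1" unfolding r_def using Rge by linarith
      also have "\<dots> \<le> 2 * R / \<epsilon>"
      proof -
        have "2 * R / \<epsilon> = R / \<epsilon> + R / \<epsilon>" by (simp add: field_simps)
        then show ?thesis using Rge by linarith
      qed
      finally show ?thesis .
    qed
    have Iball: "I \<epsilon> \<subseteq> fst ` Y \<inter> ball 0 (real r)"
    proof
      fix z assume z: "z \<in> I \<epsilon>"
      then obtain a where a: "a \<in> A" "z = inverse \<epsilon> *\<^sub>R a" using Isub[OF \<epsilon>(1)] by blast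
      have "norm a < R" using a R by auto
      then have "norm z < R / \<epsilon>" using a \<epsilon> by (simp add: divide_strict_right_mono field_simps)
      then have "norm z < real r" using rge by linarith
      then show "z \<in> fst ` Y \<inter> ball 0 (real r)" using z Isub[OF \<epsilon>(1)] by auto
    qed
    have finI: "finite (I \<epsilon>)" using adm Iball unfolding admissible_def by (meson bounded_ball finite_subset)
    define T where "T = (\<Sum>z\<in>I \<epsilon>. max (h (mark Y z) - real m) 0)"
    have S_le: "(\<Sum>z\<in>I \<epsilon>. h (mark Y z)) \<le> real m * real (card (I \<epsilon>)) + T"
    proof -
      have "(\<Sum>z\<in>I \<epsilon>. h (mark Y z)) \<le> (\<Sum>z\<in>I \<epsilon>. real m + max (h (mark Y z) - real m) 0)"
        by (intro sum_mono) linarith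
      also have "\<dots> = real m * real (card (I \<epsilon>)) + T" unfolding T_def by (simp add: sum.distrib)
      finally show ?thesis .
    qed
    have S_ge: "0 \<le> (\<Sum>z\<in>I \<epsilon>. h (mark Y z))" by (intro sum_nonneg hnn)
    have T_le: "T \<le> t * real r ^ ?d"
    proof -
      have "ennreal T = (\<Sum>z\<in>I \<epsilon>. gM h m (mark Y z))"
        unfolding T_def gM_def by (rule sum_ennreal[symmetric]) simp
      also have "\<dots> \<le> nu (gM h m) Y (ball 0 (real r))" by (rule subsum[OF adm Iball])
      also have "\<dots> \<le> ennreal (t * real r ^ ?d)" by (rule good_bound[OF adm m r1])
      finally show ?thesis using t by (simp add: ennreal_le_iff)
    qed
    have er: "\<epsilon> ^ ?d * real r ^ ?d \<le> (2 * R) ^ ?d"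
    proof -
      have "\<epsilon> * real r \<le> 2 * R" using rle \<epsilon> by (simp add: field_simps)
      then have "(\<epsilon> * real r) ^ ?d \<le> (2 * R) ^ ?d" using \<epsilon> by (intro power_mono) auto
      then show ?thesis by (simp add: power_mult_distrib)
    qed
    have c0: "0 \<le> \<epsilon> ^ ?d * real (card (I \<epsilon>))" using \<epsilon> by simp
    have part1: "real m * (\<epsilon> ^ ?d * real (card (I \<epsilon>))) < e / 2"
    proof -
      have "real m * (\<epsilon> ^ ?d * real (card (I \<epsilon>))) \<le> (real m + 1) * (\<epsilon> ^ ?d * real (card (I \<epsilon>)))"
        using c0 by (intro mult_right_mono) auto
      also have "\<dots> < (real m + 1) * (e / (2 * (real m + 1)))" using cd by (intro mult_strict_left_mono) auto
      also have "\<dots> = e / 2" by (simp add: field_simps)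
      finally show ?thesis .
    qed
    have part2: "t * (\<epsilon> ^ ?d * real r ^ ?d) < e / 2"
    proof -
      have "t * (\<epsilon> ^ ?d * real r ^ ?d) \<le> t * (2 * R) ^ ?d" using er t by (intro mult_left_mono) auto
      also have "\<dots> < e / (2 * (2 * R) ^ ?d) * (2 * R) ^ ?d" using t R by (intro mult_strict_right_mono) auto
      also have "\<dots> = e / 2" using R by (simp add: field_simps)
      finally show ?thesis .
    qed
    have "\<epsilon> ^ ?d * (\<Sum>z\<in>I \<epsilon>. h (mark Y z)) \<le> \<epsilon> ^ ?d * (real m * real (card (I \<epsilon>)) + t * real r ^ ?d)"
      using S_le T_le \<epsilon> by (intro mult_left_mono) auto
    also have "\<dots> = real m * (\<epsilon> ^ ?d * real (card (I \<epsilon>))) + t * (\<epsilon> ^ ?d * real r ^ ?d)"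
      by (simp add: algebra_simps)
    also have "\<dots> < e" using part1 part2 by linarith
    finally have "\<epsilon> ^ ?d * (\<Sum>z\<in>I \<epsilon>. h (mark Y z)) < e" .
    moreover have "0 \<le> \<epsilon> ^ ?d * (\<Sum>z\<in>I \<epsilon>. h (mark Y z))" using S_ge \<epsilon> by simp
    ultimately show ?case by (simp add: dist_real_def)
  qed
qed

theorem lemma6p2:
  fixes M :: "'b measure"
    and X :: "'b \<Rightarrow> ('a::euclidean_space \<times> 'k::polish_space) set"
    and psi :: "'b \<Rightarrow> 'k measure"
    and A :: "'a set"
    and h :: "'k \<Rightarrow> real"
    and I :: "real \<Rightarrow> 'b \<Rightarrow> 'a set"
  assumes "prob_space M"
    and "stationary_mpp M X"
    and "\<And>B. B \<in> sets borel \<Longrightarrow> bounded B \<Longrightarrow> (\<integral>\<^sup>+ \<omega>. npts (X \<omega>) B \<partial>M) < \<infinity>"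
    and "is_psi M X psi"
    and "A \<in> sets borel" and "bounded A"
    and "h \<in> borel_measurable borel" and "\<And>k. h k \<ge> 0"
    and "AE \<omega> in M. (\<integral>\<^sup>+ k. ennreal (h k) \<partial>psi \<omega>) < \<infinity>"
    and "\<And>\<epsilon> \<omega>. \<epsilon> > 0 \<Longrightarrow> \<omega> \<in> space M \<Longrightarrow>
           I \<epsilon> \<omega> \<subseteq> fst ` X \<omega> \<inter> (\<lambda>a. inverse \<epsilon> *\<^sub>R a) ` A"
    and "AE \<omega> in M. ((\<lambda>\<epsilon>. \<epsilon> ^ DIM('a) * real (card (I \<epsilon> \<omega>))) \<longlongrightarrow> 0) (at_right 0)"
  shows "AE \<omega> in M. ((\<lambda>\<epsilon>. \<epsilon> ^ DIM('a) * (\<Sum>z\<in>I \<epsilon> \<omega>. h (mark (X \<omega>) z))) \<longlongrightarrow> 0) (at_right 0)"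
proof -
  interpret statX M X by (rule statX.intro[OF assms(1,2)])
  have good: "AE \<omega> in M. \<forall>n::nat. \<exists>m. \<forall>N. X \<omega> \<notin> Psi (gM h m) (1 / real (Suc n)) N"
    unfolding AE_all_countable by (intro allI main_prob[OF assms(4,7,8,9)]) simp
  show ?thesis using good assms(11) AE_space
  proof eventually_elim
    case (elim \<omega>)
    show ?case
      by (rule pathwise[OF X_adm[OF elim(3)] assms(8) assms(6) assms(10)[OF _ elim(3)] elim(2) elim(1)])
  qed
qed

end
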